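(* Let $S$ be a restriction monoid generated, as an algebra of type $(2,1,1,0)$, by a set $A$; let $T=A^*$, $E=P(S)$, and for $v\in T$ let $\overline{v}$ be the value of $v$ in $S$. For $v\in T$ and $e\in E$ let $v\cdot e$ be defined iff $\overline{v}^*\ge e$, and then $v\cdot e=(\overline{v}e)^+$. Then: (1) $\cdot$ is a partially defined action of $T$ on $E$ (satisfying axioms (A), (B), (C)), and the monoid $M(T,E)$ is ultra $F$-restriction (and ample); (2) the map $M(T,E)\to S$, $(e,v)\mapsto e\overline{v}$, is a surjective projection separating homomorphism of $(2,1,1,0)$-algebras.
   Context: Restriction semigroup: algebra $(S,\cdot,{}^*,{}^+)$ with $(S,\cdot)$ a semigroup satisfying $xx^*=x$, $x^*y^*=y^*x^*$, $(xy^* )^*=x^*y^*$, $x^*y=y(xy)^*$, $x^+x=x$, $x^+y^+=y^+x^+$, $(x^+y)^+=x^+y^+$, $xy^+=(xy)^+x$, $(x^+)^*=x^+$, $(x^* )^+=x^*$; a restriction monoid has an identity $1$ (type $(2,1,1,0)$). $P(S)=\{x^*\}$ is the semilattice of projections; $\sigma$ is the least congruence identifying projections; $S$ is proper if ($a^*=b^*$, $a\sigma b$) or ($a^+=b^+$, $a\sigma b$) imply $a=b$; $F$-restriction if each $\sigma$-class has a maximum in the order $a\le b\iff a=eb$ ($e\in P(S)$); ample if $ac=bc\Rightarrow ac^+=bc^+$ and $ca=cb\Rightarrow c^*a=c^*b$. A homomorphism is projection separating if it is injective on projections. Left partial action of monoid $T$ on semilattice $Y$: $1\cdot y=y$; if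 $t\cdot y$, $s\cdot(t\cdot y)$ defined then $(st)\cdot y$ defined and equal. Axioms with $\varphi_t\colon y\mapsto t\cdot y$: (A) $\mathrm{dom}\varphi_t,\mathrm{ran}\varphi_t$ order ideals; (B) $\varphi_t$ an order-isomorphism between them; (C) $\mathrm{dom}\varphi_t\ne\varnothing$. Partially defined action: $(st)\cdot x$ defined iff $t\cdot x$ and $s\cdot(t\cdot x)$ defined. Reverse: $y\circ t=\varphi_t^{-1}(y)$ for $y\in\mathrm{ran}\varphi_t$. $M(T,Y)=\{(y,t)\colon y\circ t\text{ defined}\}$, $(x,s)(y,t)=(s\cdot((x\circ s)\wedge y),st)$, $(y,t)^*=(y\circ t,1)$, $(y,t)^+=(y,1)$. Underlying left partial action of a proper restriction semigroup $S$: $t\cdot e$ ($t\in S/\sigma$) defined iff some $a\in t$ has $a^*\ge e$, value $(ae)^+$. Ultra $F$-restriction: proper, $F$-restriction, and the underlying left partial action is a partially defined action. *)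

theory Defs
  imports Main
begin

record 'a rmonoid =
  car :: "'a set"
  mul :: "'a \<Rightarrow> 'a \<Rightarrow> 'a"
  rs  :: "'a \<Rightarrow> 'a"    (* x^* *)
  rp  :: "'a \<Rightarrow> 'a"    (* x^+ *)
  idt :: "'a"

definition restriction_semigroup :: "('a, 'b) rmonoid_scheme \<Rightarrow> bool" where
  "restriction_semigroup S \<longleftrightarrow>
     (\<forall>x\<in>car S. \<forall>y\<in>car S. mul S x y \<in> car S) \<and>
     (\<forall>x\<in>car S. rs S x \<in> car S \<and> rp S x \<in> car S) \<and>
     (\<forall>x\<in>car S. \<forall>y\<in>car S. \<forall>z\<in>car S. mul S (mul S x y) z = mul S x (mul S y z)) \<and>
     (\<forall>x\<in>car S. \<forall>y\<in>car S.
        mul S x (rs S x) = x \<and>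
        mul S (rs S x) (rs S y) = mul S (rs S y) (rs S x) \<and>
        rs S (mul S x (rs S y)) = mul S (rs S x) (rs S y) \<and>
        mul S (rs S x) y = mul S y (rs S (mul S x y)) \<and>
        mul S (rp S x) x = x \<and>
        mul S (rp S x) (rp S y) = mul S (rp S y) (rp S x) \<and>
        rp S (mul S (rp S x) y) = mul S (rp S x) (rp S y) \<and>
        mul S x (rp S y) = mul S (rp S (mul S x y)) x \<and>
        rs S (rp S x) = rp S x \<and>
        rp S (rs S x) = rs S x)"

definition restriction_monoid :: "('a, 'b) rmonoid_scheme \<Rightarrow> bool" where
  "restriction_monoid S \<longleftrightarrow> restriction_semigroup S \<and> idt S \<in> car S \<and>
     (\<forall>x\<in>car S. mul S (idt S) x = x \<and> mul S x (idt S) = x)"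

definition proj :: "('a, 'b) rmonoid_scheme \<Rightarrow> 'a set" where
  "proj S = rs S ` car S"

definition nleq :: "('a, 'b) rmonoid_scheme \<Rightarrow> 'a \<Rightarrow> 'a \<Rightarrow> bool" where
  "nleq S a b \<longleftrightarrow> (\<exists>e\<in>proj S. a = mul S e b)"

definition rcong :: "('a, 'b) rmonoid_scheme \<Rightarrow> ('a \<times> 'a) set \<Rightarrow> bool" where
  "rcong S R \<longleftrightarrow> equiv (car S) R \<and>
     (\<forall>a b c. (a, b) \<in> R \<and> c \<in> car S \<longrightarrow> (mul S a c, mul S b c) \<in> R \<and> (mul S c a, mul S c b) \<in> R) \<and>
     (\<forall>a b. (a, b) \<in> R \<longrightarrow> (rs S a, rs S b) \<in> R \<and> (rp S a, rp S b) \<in> R)"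

definition sigma :: "('a, 'b) rmonoid_scheme \<Rightarrow> ('a \<times> 'a) set" where
  "sigma S = \<Inter> {R. rcong S R \<and> proj S \<times> proj S \<subseteq> R}"

definition proper :: "('a, 'b) rmonoid_scheme \<Rightarrow> bool" where
  "proper S \<longleftrightarrow> (\<forall>a\<in>car S. \<forall>b\<in>car S.
     ((rs S a = rs S b \<and> (a, b) \<in> sigma S) \<longrightarrow> a = b) \<and>
     ((rp S a = rp S b \<and> (a, b) \<in> sigma S) \<longrightarrow> a = b))"

definition F_restriction :: "('a, 'b) rmonoid_scheme \<Rightarrow> bool" where
  "F_restriction S \<longleftrightarrow> (\<forall>a\<in>car S. \<exists>m\<in>sigma S `` {a}. \<forall>b\<in>sigma S `` {a}. nleq S b m)"

definition ample :: "('a, 'b) rmonoid_scheme \<Rightarrow> bool" where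
  "ample S \<longleftrightarrow> (\<forall>a\<in>car S. \<forall>b\<in>car S. \<forall>c\<in>car S.
     (mul S a c = mul S b c \<longrightarrow> mul S a (rp S c) = mul S b (rp S c)) \<and>
     (mul S c a = mul S c b \<longrightarrow> mul S (rs S c) a = mul S (rs S c) b))"

text \<open>A partial action is given as act t y = Some (t . y) or None if undefined.\<close>

definition left_partial_action ::
  "'t set \<Rightarrow> ('t \<Rightarrow> 't \<Rightarrow> 't) \<Rightarrow> 't \<Rightarrow> 'y set \<Rightarrow> ('t \<Rightarrow> 'y \<Rightarrow> 'y option) \<Rightarrow> bool" where
  "left_partial_action T tmul tone Y act \<longleftrightarrow>
     (\<forall>t\<in>T. \<forall>y\<in>Y. \<forall>z. act t y = Some z \<longrightarrow> z \<in> Y) \<and>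
     (\<forall>y\<in>Y. act tone y = Some y) \<and>
     (\<forall>s\<in>T. \<forall>t\<in>T. \<forall>y\<in>Y. \<forall>z w. act t y = Some z \<and> act s z = Some w \<longrightarrow> act (tmul s t) y = Some w)"

definition partially_defined_action ::
  "'t set \<Rightarrow> ('t \<Rightarrow> 't \<Rightarrow> 't) \<Rightarrow> 't \<Rightarrow> 'y set \<Rightarrow> ('t \<Rightarrow> 'y \<Rightarrow> 'y option) \<Rightarrow> bool" where
  "partially_defined_action T tmul tone Y act \<longleftrightarrow> left_partial_action T tmul tone Y act \<and>
     (\<forall>s\<in>T. \<forall>t\<in>T. \<forall>x\<in>Y. act (tmul s t) x \<noteq> None \<longleftrightarrow> (\<exists>z. act t x = Some z \<and> act s z \<noteq> None))"

definition pa_dom :: "'y set \<Rightarrow> ('t \<Rightarrow> 'y \<Rightarrow> 'y option) \<Rightarrow> 't \<Rightarrow> 'y set" where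
  "pa_dom Y act t = {y\<in>Y. act t y \<noteq> None}"

definition pa_ran :: "'y set \<Rightarrow> ('t \<Rightarrow> 'y \<Rightarrow> 'y option) \<Rightarrow> 't \<Rightarrow> 'y set" where
  "pa_ran Y act t = {z. \<exists>y\<in>Y. act t y = Some z}"

definition order_ideal :: "'y set \<Rightarrow> ('y \<Rightarrow> 'y \<Rightarrow> bool) \<Rightarrow> 'y set \<Rightarrow> bool" where
  "order_ideal Y le I \<longleftrightarrow> I \<subseteq> Y \<and> (\<forall>x\<in>Y. \<forall>y\<in>I. le x y \<longrightarrow> x \<in> I)"

definition axiom_A :: "'t set \<Rightarrow> 'y set \<Rightarrow> ('y \<Rightarrow> 'y \<Rightarrow> bool) \<Rightarrow> ('t \<Rightarrow> 'y \<Rightarrow> 'y option) \<Rightarrow> bool" where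
  "axiom_A T Y le act \<longleftrightarrow> (\<forall>t\<in>T. order_ideal Y le (pa_dom Y act t) \<and> order_ideal Y le (pa_ran Y act t))"

definition axiom_B :: "'t set \<Rightarrow> 'y set \<Rightarrow> ('y \<Rightarrow> 'y \<Rightarrow> bool) \<Rightarrow> ('t \<Rightarrow> 'y \<Rightarrow> 'y option) \<Rightarrow> bool" where
  "axiom_B T Y le act \<longleftrightarrow> (\<forall>t\<in>T.
     bij_betw (\<lambda>y. the (act t y)) (pa_dom Y act t) (pa_ran Y act t) \<and>
     (\<forall>x\<in>pa_dom Y act t. \<forall>y\<in>pa_dom Y act t. le x y \<longleftrightarrow> le (the (act t x)) (the (act t y))))"

definition axiom_C :: "'t set \<Rightarrow> 'y set \<Rightarrow> ('t \<Rightarrow> 'y \<Rightarrow> 'y option) \<Rightarrow> bool" where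
  "axiom_C T Y act \<longleftrightarrow> (\<forall>t\<in>T. pa_dom Y act t \<noteq> {})"

definition pa_rev :: "'y set \<Rightarrow> ('t \<Rightarrow> 'y \<Rightarrow> 'y option) \<Rightarrow> 't \<Rightarrow> 'y \<Rightarrow> 'y" where
  "pa_rev Y act t y = (THE x. x \<in> Y \<and> act t x = Some y)"

definition Mmon ::
  "'t set \<Rightarrow> ('t \<Rightarrow> 't \<Rightarrow> 't) \<Rightarrow> 't \<Rightarrow> 'y set \<Rightarrow> ('y \<Rightarrow> 'y \<Rightarrow> 'y) \<Rightarrow> 'y
     \<Rightarrow> ('t \<Rightarrow> 'y \<Rightarrow> 'y option) \<Rightarrow> ('y \<times> 't) rmonoid" where
  "Mmon T tmul tone Y ymeet ytop act =
     \<lparr> car = {(y, t). t \<in> T \<and> y \<in> pa_ran Y act t},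
       mul = (\<lambda>(x, s) (y, t). (the (act s (ymeet (pa_rev Y act s x) y)), tmul s t)),
       rs = (\<lambda>(y, t). (pa_rev Y act t y, tone)),
       rp = (\<lambda>(y, t). (y, tone)),
       idt = (ytop, tone) \<rparr>"

definition qmul :: "('a, 'b) rmonoid_scheme \<Rightarrow> 'a set \<Rightarrow> 'a set \<Rightarrow> 'a set" where
  "qmul S s t = sigma S `` {mul S (SOME a. a \<in> s) (SOME b. b \<in> t)}"

definition uact :: "('a, 'b) rmonoid_scheme \<Rightarrow> 'a set \<Rightarrow> 'a \<Rightarrow> 'a option" where
  "uact S t e = (if e \<in> proj S \<and> (\<exists>a\<in>t. nleq S e (rs S a))
                 then Some (rp S (mul S (SOME a. a \<in> t \<and> nleq S e (rs S a)) e)) else None)"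

definition ultra_F_restriction :: "('a, 'b) rmonoid_scheme \<Rightarrow> bool" where
  "ultra_F_restriction S \<longleftrightarrow> proper S \<and> F_restriction S \<and>
     partially_defined_action (car S // sigma S) (qmul S) (sigma S `` {idt S}) (proj S) (uact S)"

definition rhom :: "('a, 'b) rmonoid_scheme \<Rightarrow> ('c, 'd) rmonoid_scheme \<Rightarrow> ('a \<Rightarrow> 'c) \<Rightarrow> bool" where
  "rhom S1 S2 h \<longleftrightarrow> h ` car S1 \<subseteq> car S2 \<and>
     (\<forall>x\<in>car S1. \<forall>y\<in>car S1. h (mul S1 x y) = mul S2 (h x) (h y)) \<and>
     (\<forall>x\<in>car S1. h (rs S1 x) = rs S2 (h x) \<and> h (rp S1 x) = rp S2 (h x)) \<and>
     h (idt S1) = idt S2"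

definition projection_separating :: "('a, 'b) rmonoid_scheme \<Rightarrow> ('a \<Rightarrow> 'c) \<Rightarrow> bool" where
  "projection_separating S h \<longleftrightarrow> inj_on h (proj S)"

inductive_set gen_by :: "('a, 'b) rmonoid_scheme \<Rightarrow> 'a set \<Rightarrow> 'a set" for S A where
  gen_base: "a \<in> A \<Longrightarrow> a \<in> gen_by S A"
| gen_one: "idt S \<in> gen_by S A"
| gen_mul: "x \<in> gen_by S A \<Longrightarrow> y \<in> gen_by S A \<Longrightarrow> mul S x y \<in> gen_by S A"
| gen_rs: "x \<in> gen_by S A \<Longrightarrow> rs S x \<in> gen_by S A"
| gen_rp: "x \<in> gen_by S A \<Longrightarrow> rp S x \<in> gen_by S A"

text \<open>T = A^*: words over A, product = concatenation, identity = empty word\<close>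
definition words :: "'a set \<Rightarrow> 'a list set" where
  "words A = {v. set v \<subseteq> A}"

definition wval :: "('a, 'b) rmonoid_scheme \<Rightarrow> 'a list \<Rightarrow> 'a" where
  "wval S v = foldr (mul S) v (idt S)"

definition ple :: "('a, 'b) rmonoid_scheme \<Rightarrow> 'a \<Rightarrow> 'a \<Rightarrow> bool" where
  "ple S e f \<longleftrightarrow> e = mul S e f"

definition wact :: "('a, 'b) rmonoid_scheme \<Rightarrow> 'a list \<Rightarrow> 'a \<Rightarrow> 'a option" where
  "wact S v e = (if e \<in> proj S \<and> ple S e (rs S (wval S v))
                 then Some (rp S (mul S (wval S v) e)) else None)"

definition MTE :: "('a, 'b) rmonoid_scheme \<Rightarrow> 'a set \<Rightarrow> ('a \<times> 'a list) rmonoid" where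
  "MTE S A = Mmon (words A) (@) [] (proj S) (mul S) (idt S) (wact S)"

end

theory Submission imports Defs begin

locale RMA =
  fixes S :: "'a rmonoid" and A :: "'a set"
  assumes rm: "restriction_monoid S" and Asub: "A \<subseteq> car S"
begin

abbreviation M (infixl "\<cdot>" 70) where "x \<cdot> y \<equiv> mul S x y"
abbreviation st where "st x \<equiv> rs S x"
abbreviation pl where "pl x \<equiv> rp S x"
abbreviation C where "C \<equiv> car S"
abbreviation P where "P \<equiv> proj S"
abbreviation one where "one \<equiv> idt S"

lemma rsg: "restriction_semigroup S" using rm by (simp add: restriction_monoid_def)

lemma mul_c[simp]: "x \<in> C \<Longrightarrow> y \<in> C \<Longrightarrow> x \<cdot> y \<in> C"
  using rsg unfolding restriction_semigroup_def by blast
lemma st_c[simp]: "x \<in> C \<Longrightarrow> st x \<in> C"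
  using rsg unfolding restriction_semigroup_def by blast
lemma pl_c[simp]: "x \<in> C \<Longrightarrow> pl x \<in> C"
  using rsg unfolding restriction_semigroup_def by blast
lemma one_c[simp]: "one \<in> C" using rm by (simp add: restriction_monoid_def)
lemma one_l[simp]: "x \<in> C \<Longrightarrow> one \<cdot> x = x" using rm by (simp add: restriction_monoid_def)
lemma one_r[simp]: "x \<in> C \<Longrightarrow> x \<cdot> one = x" using rm by (simp add: restriction_monoid_def)
lemma assoc: "x \<in> C \<Longrightarrow> y \<in> C \<Longrightarrow> z \<in> C \<Longrightarrow> x \<cdot> y \<cdot> z = x \<cdot> (y \<cdot> z)"
  using rsg unfolding restriction_semigroup_def by blast

context fixes x y assumes xy: "x \<in> C" "y \<in> C" begin
lemma ax1: "x \<cdot> st x = x" using rsg xy unfolding restriction_semigroup_def by blast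
lemma ax2: "st x \<cdot> st y = st y \<cdot> st x" using rsg xy unfolding restriction_semigroup_def by blast
lemma ax3: "st (x \<cdot> st y) = st x \<cdot> st y" using rsg xy unfolding restriction_semigroup_def by blast
lemma ax4: "st x \<cdot> y = y \<cdot> st (x \<cdot> y)" using rsg xy unfolding restriction_semigroup_def by blast
lemma ax5: "pl x \<cdot> x = x" using rsg xy unfolding restriction_semigroup_def by blast
lemma ax6: "pl x \<cdot> pl y = pl y \<cdot> pl x" using rsg xy unfolding restriction_semigroup_def by blast
lemma ax7: "pl (pl x \<cdot> y) = pl x \<cdot> pl y" using rsg xy unfolding restriction_semigroup_def by blast
lemma ax8: "x \<cdot> pl y = pl (x \<cdot> y) \<cdot> x" using rsg xy unfolding restriction_semigroup_def by blast
lemma ax9: "st (pl x) = pl x" using rsg xy unfolding restriction_semigroup_def by blast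
lemma ax10: "pl (st x) = st x" using rsg xy unfolding restriction_semigroup_def by blast
end

lemma st_st[simp]: "x \<in> C \<Longrightarrow> st (st x) = st x"
  using ax9[of "st x" one] ax10[of x one] by simp
lemma pl_pl[simp]: "x \<in> C \<Longrightarrow> pl (pl x) = pl x"
  using ax10[of "pl x" one] ax9[of x one] by simp
lemma pl_st[simp]: "x \<in> C \<Longrightarrow> pl (st x) = st x" using ax10[of x one] by simp
lemma st_pl[simp]: "x \<in> C \<Longrightarrow> st (pl x) = pl x" using ax9[of x one] by simp

lemma projI: "x \<in> C \<Longrightarrow> st x \<in> P" by (simp add: proj_def)
lemma projI2: "x \<in> C \<Longrightarrow> pl x \<in> P"
proof -
  assume x: "x \<in> C"
  have "pl x = st (pl x)" using x by simp
  moreover have "st (pl x) \<in> P" using x by (intro projI) simp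
  ultimately show ?thesis by simp
qed
lemma projE: "e \<in> P \<Longrightarrow> (\<And>x. x \<in> C \<Longrightarrow> e = st x \<Longrightarrow> thesis) \<Longrightarrow> thesis"
  unfolding proj_def by (erule imageE)
lemma proj_c[simp]: "e \<in> P \<Longrightarrow> e \<in> C" by (erule projE) simp
lemma proj_st[simp]: "e \<in> P \<Longrightarrow> st e = e" by (erule projE) simp
lemma proj_pl[simp]: "e \<in> P \<Longrightarrow> pl e = e" by (erule projE) simp
lemma proj_idem[simp]: "e \<in> P \<Longrightarrow> e \<cdot> e = e" using ax1[of e one] by simp
lemma proj_comm: "e \<in> P \<Longrightarrow> f \<in> P \<Longrightarrow> e \<cdot> f = f \<cdot> e" using ax2[of e f] by simp
lemma proj_mul[simp]: "e \<in> P \<Longrightarrow> f \<in> P \<Longrightarrow> e \<cdot> f \<in> P"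
  using ax3[of e f] projI[of "e \<cdot> f"] by simp
lemma one_st[simp]: "st one = one" using ax1[of one one] by simp
lemma one_P[simp]: "one \<in> P" using projI[of one] by simp
lemma one_pl[simp]: "pl one = one" using one_P proj_pl by blast

lemma F1: "a \<in> C \<Longrightarrow> e \<in> P \<Longrightarrow> st (a \<cdot> e) = st a \<cdot> e" using ax3[of a e] by simp
lemma F2: "a \<in> C \<Longrightarrow> e \<in> P \<Longrightarrow> a \<cdot> e = pl (a \<cdot> e) \<cdot> a" using ax8[of a e] by simp
lemma F3: "a \<in> C \<Longrightarrow> e \<in> P \<Longrightarrow> e \<cdot> a = a \<cdot> st (e \<cdot> a)" using ax4[of e a] by simp
lemma F4: "a \<in> C \<Longrightarrow> e \<in> P \<Longrightarrow> pl (e \<cdot> a) = e \<cdot> pl a" using ax7[of e a] by simp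


lemma pleD: "ple S e f \<Longrightarrow> e = e \<cdot> f" by (simp add: ple_def)
lemma pleI: "e = e \<cdot> f \<Longrightarrow> ple S e f" by (simp add: ple_def)

lemma ple_trans: "e \<in> P \<Longrightarrow> f \<in> P \<Longrightarrow> g \<in> P \<Longrightarrow> ple S e f \<Longrightarrow> ple S f g \<Longrightarrow> ple S e g"
  unfolding ple_def by (metis assoc proj_c)
lemma ple_antisym: "e \<in> P \<Longrightarrow> f \<in> P \<Longrightarrow> ple S e f \<Longrightarrow> ple S f e \<Longrightarrow> e = f"
  unfolding ple_def using proj_comm by metis
lemma ple_refl: "e \<in> P \<Longrightarrow> ple S e e" unfolding ple_def by simp
lemma ple_one: "e \<in> P \<Longrightarrow> ple S e one" unfolding ple_def by simp
lemma ple_meet1: "e \<in> P \<Longrightarrow> f \<in> P \<Longrightarrow> ple S (e \<cdot> f) e"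
  unfolding ple_def using proj_comm[of e f] assoc[of f e e] proj_idem[of e] by (simp add: assoc)
lemma ple_meet2: "e \<in> P \<Longrightarrow> f \<in> P \<Longrightarrow> ple S (e \<cdot> f) f"
  unfolding ple_def by (simp add: assoc)

lemma G1: "a \<in> C \<Longrightarrow> b \<in> C \<Longrightarrow> pl (a \<cdot> b) = pl a \<cdot> pl (a \<cdot> b)"
proof -
  assume ab: "a \<in> C" "b \<in> C"
  have "pl a \<cdot> (a \<cdot> b) = a \<cdot> b" using ab ax5[of a one] assoc[of "pl a" a b] by simp
  hence "pl (a \<cdot> b) = pl (pl a \<cdot> (a \<cdot> b))" by simp
  also have "\<dots> = pl a \<cdot> pl (a \<cdot> b)" using ab ax7[of a "a \<cdot> b"] by simp
  finally show ?thesis .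
qed
lemma G1': "a \<in> C \<Longrightarrow> b \<in> C \<Longrightarrow> ple S (pl (a \<cdot> b)) (pl a)"
  using G1 proj_comm projI2 by (simp add: ple_def)

lemma G2: "a \<in> C \<Longrightarrow> b \<in> C \<Longrightarrow> st (a \<cdot> b) = st (a \<cdot> b) \<cdot> st b"
proof -
  assume ab: "a \<in> C" "b \<in> C"
  have "a \<cdot> b = a \<cdot> b \<cdot> st b" using ab ax1[of b one] assoc[of a b "st b"] by simp
  hence "st (a \<cdot> b) = st (a \<cdot> b \<cdot> st b)" by (rule arg_cong)
  also have "\<dots> = st (a \<cdot> b) \<cdot> st b" using ab ax3[of "a \<cdot> b" b] by simp
  finally show ?thesis .
qed
lemma G2': "a \<in> C \<Longrightarrow> b \<in> C \<Longrightarrow> ple S (st (a \<cdot> b)) (st b)"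
  using G2 by (simp add: ple_def)


lemma R1: "a \<in> C \<Longrightarrow> e \<in> P \<Longrightarrow> ple S e (st a) \<Longrightarrow> st (pl (a \<cdot> e) \<cdot> a) = e"
proof -
  assume h: "a \<in> C" "e \<in> P" "ple S e (st a)"
  have "pl (a \<cdot> e) \<cdot> a = a \<cdot> e" using F2[of a e] h by simp
  hence "st (pl (a \<cdot> e) \<cdot> a) = st a \<cdot> e" using F1[of a e] h by simp
  also have "\<dots> = e" using h proj_comm[of e "st a"] projI[of a] by (simp add: ple_def)
  finally show ?thesis .
qed

lemma R2: "a \<in> C \<Longrightarrow> f \<in> P \<Longrightarrow> ple S f (pl a) \<Longrightarrow> pl (a \<cdot> st (f \<cdot> a)) = f"
proof -
  assume h: "a \<in> C" "f \<in> P" "ple S f (pl a)"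
  have "a \<cdot> st (f \<cdot> a) = f \<cdot> a" using F3[of a f] h by simp
  hence "pl (a \<cdot> st (f \<cdot> a)) = f \<cdot> pl a" using F4[of a f] h by simp
  also have "\<dots> = f" using h by (simp add: ple_def)
  finally show ?thesis .
qed

lemma C2: "a \<in> C \<Longrightarrow> c \<in> C \<Longrightarrow> pl (a \<cdot> pl c) = pl (a \<cdot> c)"
proof -
  assume h: "a \<in> C" "c \<in> C"
  have "pl (a \<cdot> pl c) = pl (pl (a \<cdot> c) \<cdot> a)" using ax8[of a c] h by simp
  also have "\<dots> = pl (a \<cdot> c) \<cdot> pl a" using ax7[of "a \<cdot> c" a] h by simp
  also have "\<dots> = pl a \<cdot> pl (a \<cdot> c)" using ax6[of "a \<cdot> c" a] h by simp
  also have "\<dots> = pl (a \<cdot> c)" using G1[of a c] h by simp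
  finally show ?thesis .
qed

lemma st_le_mul: "a \<in> C \<Longrightarrow> e \<in> P \<Longrightarrow> ple S (st (e \<cdot> a)) (st a)"
  using G2'[of e a] by simp

lemma C1a: assumes h: "a \<in> C" "b \<in> C" "e \<in> P" "ple S e (st (a \<cdot> b))"
  shows "ple S e (st b)" "ple S (pl (b \<cdot> e)) (st a)"
proof -
  show "ple S e (st b)" using ple_trans[OF _ _ _ h(4) G2'[of a b]] h projI by simp
  have e1: "e = st (a \<cdot> b) \<cdot> e" using h proj_comm[of e "st (a \<cdot> b)"] projI[of "a \<cdot> b"] by (simp add: ple_def)
  have "b \<cdot> e = b \<cdot> (st (a \<cdot> b) \<cdot> e)" using e1 by simp
  also have "\<dots> = (b \<cdot> st (a \<cdot> b)) \<cdot> e" using h by (simp add: assoc)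
  also have "\<dots> = (st a \<cdot> b) \<cdot> e" using ax4[of a b] h by simp
  also have "\<dots> = st a \<cdot> (b \<cdot> e)" using h by (simp add: assoc)
  finally have "pl (b \<cdot> e) = pl (st a \<cdot> (b \<cdot> e))" by (rule arg_cong)
  also have "\<dots> = st a \<cdot> pl (b \<cdot> e)" using F4[of "b \<cdot> e" "st a"] h projI by simp
  finally show "ple S (pl (b \<cdot> e)) (st a)"
    using h proj_comm[of "st a" "pl (b \<cdot> e)"] projI projI2[of "b \<cdot> e"] by (simp add: ple_def)
qed

lemma C1b: assumes h: "a \<in> C" "b \<in> C" "e \<in> P" "ple S e (st b)" "ple S (pl (b \<cdot> e)) (st a)"
  shows "ple S e (st (a \<cdot> b))"
proof -
  have p0: "pl (b \<cdot> e) = pl (b \<cdot> e) \<cdot> st a" using h(5) by (rule pleD)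
  have p: "pl (b \<cdot> e) = st a \<cdot> pl (b \<cdot> e)"
    using p0 proj_comm[of "st a" "pl (b \<cdot> e)"] h(1,2,3) projI projI2[of "b \<cdot> e"] by simp
  have "b \<cdot> e = pl (b \<cdot> e) \<cdot> (b \<cdot> e)" using ax5[of "b \<cdot> e" one] h by simp
  also have "\<dots> = st a \<cdot> pl (b \<cdot> e) \<cdot> (b \<cdot> e)" using p by (rule arg_cong[where f="\<lambda>z. z \<cdot> (b \<cdot> e)"])
  also have "\<dots> = st a \<cdot> (pl (b \<cdot> e) \<cdot> (b \<cdot> e))" using h projI projI2[of "b \<cdot> e"] by (simp add: assoc)
  also have "\<dots> = st a \<cdot> (b \<cdot> e)" using ax5[of "b \<cdot> e" one] h by simp
  also have "\<dots> = (st a \<cdot> b) \<cdot> e" using h by (simp add: assoc)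
  also have "\<dots> = b \<cdot> st (a \<cdot> b) \<cdot> e" using ax4[of a b] h by simp
  also have "\<dots> = b \<cdot> (st (a \<cdot> b) \<cdot> e)" using h by (simp add: assoc)
  finally have be: "b \<cdot> e = b \<cdot> (st (a \<cdot> b) \<cdot> e)" .
  have se: "st (b \<cdot> e) = e" using F1[of b e] h proj_comm[of e "st b"] projI[of b] by (simp add: ple_def)
  have "st (b \<cdot> (st (a \<cdot> b) \<cdot> e)) = st b \<cdot> (st (a \<cdot> b) \<cdot> e)"
    using F1[of b "st (a \<cdot> b) \<cdot> e"] h projI by simp
  also have "\<dots> = (st b \<cdot> st (a \<cdot> b)) \<cdot> e"
    using h(1,2,3) by (intro assoc[symmetric]) simp_all
  also have "\<dots> = (st (a \<cdot> b) \<cdot> st b) \<cdot> e"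
    using h(1,2) by (simp only: proj_comm[OF projI[of b] projI[of "a \<cdot> b"]] mul_c)
  also have "\<dots> = st (a \<cdot> b) \<cdot> e" using G2[of a b] h by simp
  finally have X: "st (b \<cdot> (st (a \<cdot> b) \<cdot> e)) = st (a \<cdot> b) \<cdot> e" .
  have "e = st (b \<cdot> e)" using se by simp
  also have "\<dots> = st (b \<cdot> (st (a \<cdot> b) \<cdot> e))" using be by (rule arg_cong)
  finally have "e = st (a \<cdot> b) \<cdot> e" using X by simp
  thus ?thesis using h projI[of "a \<cdot> b"] proj_comm[of e "st (a \<cdot> b)"] by (simp add: ple_def)
qed


lemma wval_nil[simp]: "wval S [] = one" by (simp add: wval_def)

lemma words_append[simp]: "s @ t \<in> words A \<longleftrightarrow> s \<in> words A \<and> t \<in> words A"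
  by (auto simp: words_def)
lemma words_nil[simp]: "[] \<in> words A" by (simp add: words_def)

lemma foldr_c: "set v \<subseteq> C \<Longrightarrow> z \<in> C \<Longrightarrow> foldr (mul S) v z \<in> C"
  by (induction v) auto
lemma foldr_mul: "set v \<subseteq> C \<Longrightarrow> z \<in> C \<Longrightarrow> foldr (mul S) v z = foldr (mul S) v one \<cdot> z"
proof (induction v)
  case Nil thus ?case by simp
next
  case (Cons a v)
  hence "foldr (mul S) (a # v) z = a \<cdot> (foldr (mul S) v one \<cdot> z)" by simp
  also have "\<dots> = a \<cdot> foldr (mul S) v one \<cdot> z" using Cons.prems foldr_c[of v one]
    by (simp add: assoc)
  finally show ?case by simp
qed

lemma wval_c[simp]: "t \<in> words A \<Longrightarrow> wval S t \<in> C"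
  unfolding wval_def words_def using Asub foldr_c by auto

lemma wval_append: "s \<in> words A \<Longrightarrow> t \<in> words A \<Longrightarrow> wval S (s @ t) = wval S s \<cdot> wval S t"
  unfolding wval_def using foldr_mul[of s "foldr (mul S) t one"] wval_c[of t] Asub
  by (simp add: words_def wval_def)

end

lemma pda_transfer:
  assumes pda: "partially_defined_action T tm tone Y act"
  and Tc: "\<And>s t. s \<in> T \<Longrightarrow> t \<in> T \<Longrightarrow> tm s t \<in> T" and one: "tone \<in> T"
  and T': "T' = c ` T" and cm: "\<And>s t. s \<in> T \<Longrightarrow> t \<in> T \<Longrightarrow> tm' (c s) (c t) = c (tm s t)"
  and c1: "c tone = tone'"
  and Y': "Y' = j ` Y"
  and hact: "\<And>t y. t \<in> T \<Longrightarrow> y \<in> Y \<Longrightarrow> act' (c t) (j y) = map_option j (act t y)"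
  shows "partially_defined_action T' tm' tone' Y' act'"
proof -
  have P1: "\<And>t y z. t \<in> T \<Longrightarrow> y \<in> Y \<Longrightarrow> act t y = Some z \<Longrightarrow> z \<in> Y"
   and P2: "\<And>y. y \<in> Y \<Longrightarrow> act tone y = Some y"
   and P3: "\<And>s t y z w. s \<in> T \<Longrightarrow> t \<in> T \<Longrightarrow> y \<in> Y \<Longrightarrow> act t y = Some z \<Longrightarrow> act s z = Some w \<Longrightarrow> act (tm s t) y = Some w"
   and P4: "\<And>s t x. s \<in> T \<Longrightarrow> t \<in> T \<Longrightarrow> x \<in> Y \<Longrightarrow> act (tm s t) x \<noteq> None \<longleftrightarrow> (\<exists>z. act t x = Some z \<and> act s z \<noteq> None)"
    using pda unfolding partially_defined_action_def left_partial_action_def by blast+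
  show ?thesis
    unfolding partially_defined_action_def left_partial_action_def T' Y'
  proof (intro conjI ballI allI impI)
    fix t' y' z assume t': "t' \<in> c ` T" and y': "y' \<in> j ` Y" and h: "act' t' y' = Some z"
    then obtain t y where ty: "t \<in> T" "y \<in> Y" "t' = c t" "y' = j y" by blast
    from h ty hact obtain z0 where "act t y = Some z0" "z = j z0" by auto
    thus "z \<in> j ` Y" using P1 ty by blast
  next
    fix y' assume "y' \<in> j ` Y"
    then obtain y where y: "y \<in> Y" "y' = j y" by blast
    show "act' tone' y' = Some y'" using hact[OF one y(1)] P2[OF y(1)] c1 y by simp
  next
    fix s' t' y' assume s': "s' \<in> c ` T" and t': "t' \<in> c ` T" and y': "y' \<in> j ` Y"
    then obtain s t y where ty: "s \<in> T" "t \<in> T" "y \<in> Y" "s' = c s" "t' = c t" "y' = j y" by blast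
    have tm: "tm' s' t' = c (tm s t)" using cm ty by simp
    { fix z' w' assume h: "act' t' y' = Some z' \<and> act' s' z' = Some w'"
      from h ty hact obtain z where z: "act t y = Some z" "z' = j z" by auto
      have zY: "z \<in> Y" using P1 z ty by blast
      from h z ty hact[OF ty(1) zY] obtain w where w: "act s z = Some w" "w' = j w" by auto
      have "act (tm s t) y = Some w" using P3 ty z w zY by blast
      thus "act' (tm' s' t') y' = Some w'" using hact[OF Tc[OF ty(1,2)] ty(3)] tm ty w by simp }
    have "act' (tm' s' t') y' \<noteq> None \<longleftrightarrow> act (tm s t) y \<noteq> None"
      using hact[OF Tc[OF ty(1,2)] ty(3)] tm ty by simp
    also have "\<dots> \<longleftrightarrow> (\<exists>z. act t y = Some z \<and> act s z \<noteq> None)" using P4 ty by blast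
    also have "\<dots> \<longleftrightarrow> (\<exists>z'. act' t' y' = Some z' \<and> act' s' z' \<noteq> None)"
    proof
      assume "\<exists>z. act t y = Some z \<and> act s z \<noteq> None"
      then obtain z where z: "act t y = Some z" "act s z \<noteq> None" by blast
      have zY: "z \<in> Y" using P1 z ty by blast
      show "\<exists>z'. act' t' y' = Some z' \<and> act' s' z' \<noteq> None"
        using z hact[OF ty(2,3)] hact[OF ty(1) zY] ty by (intro exI[of _ "j z"]) simp
    next
      assume "\<exists>z'. act' t' y' = Some z' \<and> act' s' z' \<noteq> None"
      then obtain z' where z': "act' t' y' = Some z'" "act' s' z' \<noteq> None" by blast
      from z' ty hact obtain z where z: "act t y = Some z" "z' = j z" by auto
      have zY: "z \<in> Y" using P1 z ty by blast
      show "\<exists>z. act t y = Some z \<and> act s z \<noteq> None"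
        using z z' hact[OF ty(1) zY] ty by auto
    qed
    finally show "act' (tm' s' t') y' \<noteq> None \<longleftrightarrow> (\<exists>z'. act' t' y' = Some z' \<and> act' s' z' \<noteq> None)" .
  qed
qed

lemma rm_embed:
  fixes M :: "('a, 'm) rmonoid_scheme" and Q :: "('b, 'q) rmonoid_scheme"
  assumes Q: "restriction_monoid Q"
  and cl1: "\<And>x y. x \<in> car M \<Longrightarrow> y \<in> car M \<Longrightarrow> mul M x y \<in> car M"
  and cl2: "\<And>x. x \<in> car M \<Longrightarrow> rs M x \<in> car M"
  and cl3: "\<And>x. x \<in> car M \<Longrightarrow> rp M x \<in> car M"
  and cl4: "idt M \<in> car M"
  and gc: "\<And>x. x \<in> car M \<Longrightarrow> g x \<in> car Q"
  and inj: "inj_on g (car M)"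
  and h1: "\<And>x y. x \<in> car M \<Longrightarrow> y \<in> car M \<Longrightarrow> g (mul M x y) = mul Q (g x) (g y)"
  and h2: "\<And>x. x \<in> car M \<Longrightarrow> g (rs M x) = rs Q (g x)"
  and h3: "\<And>x. x \<in> car M \<Longrightarrow> g (rp M x) = rp Q (g x)"
  and h4: "g (idt M) = idt Q"
  shows "restriction_monoid M"
proof -
  have eq: "\<And>u v. u \<in> car M \<Longrightarrow> v \<in> car M \<Longrightarrow> g u = g v \<Longrightarrow> u = v"
    using inj by (meson inj_onD)
  have QS: "restriction_semigroup Q" and Qi: "idt Q \<in> car Q"
    and Qid: "\<And>x. x \<in> car Q \<Longrightarrow> mul Q (idt Q) x = x \<and> mul Q x (idt Q) = x"
    using Q unfolding restriction_monoid_def by auto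
  have Qc: "\<And>x y. x \<in> car Q \<Longrightarrow> y \<in> car Q \<Longrightarrow> mul Q x y \<in> car Q"
    "\<And>x. x \<in> car Q \<Longrightarrow> rs Q x \<in> car Q"  "\<And>x. x \<in> car Q \<Longrightarrow> rp Q x \<in> car Q"
    using QS unfolding restriction_semigroup_def by auto
  have Qa: "\<And>x y z. x \<in> car Q \<Longrightarrow> y \<in> car Q \<Longrightarrow> z \<in> car Q \<Longrightarrow> mul Q (mul Q x y) z = mul Q x (mul Q y z)"
    using QS unfolding restriction_semigroup_def by blast
  have Qx: "\<And>x y. x \<in> car Q \<Longrightarrow> y \<in> car Q \<Longrightarrow>
        mul Q x (rs Q x) = x \<and>
        mul Q (rs Q x) (rs Q y) = mul Q (rs Q y) (rs Q x) \<and>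
        rs Q (mul Q x (rs Q y)) = mul Q (rs Q x) (rs Q y) \<and>
        mul Q (rs Q x) y = mul Q y (rs Q (mul Q x y)) \<and>
        mul Q (rp Q x) x = x \<and>
        mul Q (rp Q x) (rp Q y) = mul Q (rp Q y) (rp Q x) \<and>
        rp Q (mul Q (rp Q x) y) = mul Q (rp Q x) (rp Q y) \<and>
        mul Q x (rp Q y) = mul Q (rp Q (mul Q x y)) x \<and>
        rs Q (rp Q x) = rp Q x \<and>
        rp Q (rs Q x) = rs Q x"
    using QS unfolding restriction_semigroup_def by blast
  note cl = cl1 cl2 cl3 cl4
  note hh = h1 h2 h3 h4
  show ?thesis
    unfolding restriction_monoid_def restriction_semigroup_def
  proof (intro conjI ballI)
    fix x y z assume xyz: "x \<in> car M" "y \<in> car M" "z \<in> car M"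
    show "mul M (mul M x y) z = mul M x (mul M y z)"
      by (rule eq) (use xyz Qa gc in \<open>simp_all add: cl hh\<close>)
  next
    fix x y assume xy: "x \<in> car M" "y \<in> car M"
    note X = Qx[OF gc[OF xy(1)] gc[OF xy(2)]]
    show "mul M x (rs M x) = x" by (rule eq) (use xy X in \<open>simp_all add: cl hh\<close>)
    show "mul M (rs M x) (rs M y) = mul M (rs M y) (rs M x)" by (rule eq) (use xy X in \<open>simp_all add: cl hh\<close>)
    show "rs M (mul M x (rs M y)) = mul M (rs M x) (rs M y)" by (rule eq) (use xy X gc in \<open>simp_all add: cl hh\<close>)
    show "mul M (rs M x) y = mul M y (rs M (mul M x y))" by (rule eq) (use xy X gc in \<open>simp_all add: cl hh\<close>)
    show "mul M (rp M x) x = x" by (rule eq) (use xy X in \<open>simp_all add: cl hh\<close>)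
    show "mul M (rp M x) (rp M y) = mul M (rp M y) (rp M x)" by (rule eq) (use xy X in \<open>simp_all add: cl hh\<close>)
    show "rp M (mul M (rp M x) y) = mul M (rp M x) (rp M y)" by (rule eq) (use xy X gc in \<open>simp_all add: cl hh\<close>)
    show "mul M x (rp M y) = mul M (rp M (mul M x y)) x" by (rule eq) (use xy X gc in \<open>simp_all add: cl hh\<close>)
    show "rs M (rp M x) = rp M x" by (rule eq) (use xy X gc in \<open>simp_all add: cl hh\<close>)
    show "rp M (rs M x) = rs M x" by (rule eq) (use xy X gc in \<open>simp_all add: cl hh\<close>)
  next
    fix x assume x: "x \<in> car M"
    show "mul M (idt M) x = x" by (rule eq) (use x Qid gc in \<open>simp_all add: cl hh\<close>)
    show "mul M x (idt M) = x" by (rule eq) (use x Qid gc in \<open>simp_all add: cl hh\<close>)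
    show "rs M x \<in> car M" "rp M x \<in> car M" using x cl by auto
  next
    fix x y assume "x \<in> car M" "y \<in> car M"
    thus "mul M x y \<in> car M" using cl by auto
  next
    show "idt M \<in> car M" by (rule cl4)
  qed
qed


context RMA begin

lemma wactS: "e \<in> P \<Longrightarrow> ple S e (st (wval S t)) \<Longrightarrow> wact S t e = Some (pl (wval S t \<cdot> e))"
  by (simp add: wact_def)
lemma wactN: "\<not> (e \<in> P \<and> ple S e (st (wval S t))) \<Longrightarrow> wact S t e = None"
  by (simp add: wact_def)
lemma wact_Some: "wact S t e = Some z \<longleftrightarrow> e \<in> P \<and> ple S e (st (wval S t)) \<and> z = pl (wval S t \<cdot> e)"
  by (auto simp: wact_def)

lemma dom_char: "pa_dom P (wact S) t = {e\<in>P. ple S e (st (wval S t))}"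
  by (auto simp: pa_dom_def wact_def)

lemma ran_char: assumes t: "t \<in> words A"
  shows "pa_ran P (wact S) t = {f\<in>P. ple S f (pl (wval S t))}"
proof (intro set_eqI iffI)
  fix f assume "f \<in> pa_ran P (wact S) t"
  then obtain e where e: "e \<in> P" "ple S e (st (wval S t))" "f = pl (wval S t \<cdot> e)"
    unfolding pa_ran_def wact_Some by blast
  thus "f \<in> {f\<in>P. ple S f (pl (wval S t))}" using t G1'[of "wval S t" e] projI2[of "wval S t \<cdot> e"] by simp
next
  fix f assume "f \<in> {f\<in>P. ple S f (pl (wval S t))}"
  hence f: "f \<in> P" "ple S f (pl (wval S t))" by auto
  have 1: "st (f \<cdot> wval S t) \<in> P" using f t projI by simp
  have 2: "ple S (st (f \<cdot> wval S t)) (st (wval S t))" using st_le_mul f t by simp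
  have 3: "pl (wval S t \<cdot> st (f \<cdot> wval S t)) = f" using R2 f t by simp
  have "wact S t (st (f \<cdot> wval S t)) = Some f" using wactS[OF 1 2] 3 by simp
  thus "f \<in> pa_ran P (wact S) t" unfolding pa_ran_def using 1 by blast
qed

lemma rev_char: assumes t: "t \<in> words A" and f: "f \<in> P" "ple S f (pl (wval S t))"
  shows "pa_rev P (wact S) t f = st (f \<cdot> wval S t)"
  unfolding pa_rev_def
proof (rule the_equality)
  have 1: "st (f \<cdot> wval S t) \<in> P" using f t projI by simp
  have 2: "ple S (st (f \<cdot> wval S t)) (st (wval S t))" using st_le_mul f t by simp
  have 3: "pl (wval S t \<cdot> st (f \<cdot> wval S t)) = f" using R2 f t by simp
  show "st (f \<cdot> wval S t) \<in> P \<and> wact S t (st (f \<cdot> wval S t)) = Some f"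
    using wactS[OF 1 2] 3 1 by simp
next
  fix x assume "x \<in> P \<and> wact S t x = Some f"
  hence x: "x \<in> P" "ple S x (st (wval S t))" "f = pl (wval S t \<cdot> x)" unfolding wact_Some by auto
  have "st (pl (wval S t \<cdot> x) \<cdot> wval S t) = x" using R1 x t by simp
  thus "x = st (f \<cdot> wval S t)" using x(3) by simp
qed

lemma PA1: "wact S t y = Some z \<Longrightarrow> t \<in> words A \<Longrightarrow> z \<in> P"
  unfolding wact_Some using projI2 by auto

lemma PA2: "y \<in> P \<Longrightarrow> wact S [] y = Some y"
  by (simp add: wactS ple_one)

lemma PA3: assumes st: "s \<in> words A" "t \<in> words A" and y: "y \<in> P"
  and h1: "wact S t y = Some z" and h2: "wact S s z = Some w"
  shows "wact S (s @ t) y = Some w"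
proof -
  from h1 have a: "ple S y (st (wval S t))" "z = pl (wval S t \<cdot> y)" unfolding wact_Some by auto
  from h2 have b: "ple S z (st (wval S s))" "w = pl (wval S s \<cdot> z)" unfolding wact_Some by auto
  have "ple S y (st (wval S s \<cdot> wval S t))" using C1b[of "wval S s" "wval S t" y] a b st y by simp
  hence "wact S (s @ t) y = Some (pl (wval S s \<cdot> wval S t \<cdot> y))"
    using wactS[of y "s @ t"] y st by (simp add: wval_append)
  also have "pl (wval S s \<cdot> wval S t \<cdot> y) = w"
    using b a C2[of "wval S s" "wval S t \<cdot> y"] st y by (simp add: assoc)
  finally show ?thesis .
qed

lemma PA4: assumes st: "s \<in> words A" "t \<in> words A" and x: "x \<in> P"
  shows "wact S (s @ t) x \<noteq> None \<longleftrightarrow> (\<exists>z. wact S t x = Some z \<and> wact S s z \<noteq> None)"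
proof
  assume "wact S (s @ t) x \<noteq> None"
  hence h: "ple S x (st (wval S s \<cdot> wval S t))" using x st by (auto simp: wact_def wval_append split: if_splits)
  have "ple S x (st (wval S t))" "ple S (pl (wval S t \<cdot> x)) (st (wval S s))"
    using C1a[OF _ _ x h] st by auto
  thus "\<exists>z. wact S t x = Some z \<and> wact S s z \<noteq> None"
    using x st projI2[of "wval S t \<cdot> x"] by (auto simp: wact_def)
next
  assume "\<exists>z. wact S t x = Some z \<and> wact S s z \<noteq> None"
  then obtain z where "wact S t x = Some z" "wact S s z \<noteq> None" by blast
  hence "ple S x (st (wval S t))" "ple S (pl (wval S t \<cdot> x)) (st (wval S s))"
    by (auto simp: wact_def split: if_splits)
  hence "ple S x (st (wval S s \<cdot> wval S t))" using C1b x st by simp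
  thus "wact S (s @ t) x \<noteq> None" using x st by (simp add: wact_def wval_append)
qed

lemma pda: "partially_defined_action (words A) (@) [] P (wact S)"
  unfolding partially_defined_action_def left_partial_action_def
  using PA1 PA2 PA3 PA4 by blast


lemma axA: "axiom_A (words A) P (ple S) (wact S)"
  unfolding axiom_A_def order_ideal_def
proof (intro ballI conjI)
  fix t assume t: "t \<in> words A"
  show "pa_dom P (wact S) t \<subseteq> P" by (auto simp: dom_char)
  show "pa_ran P (wact S) t \<subseteq> P" using t by (auto simp: ran_char)
  fix x y assume x: "x \<in> P"
  { assume "y \<in> pa_dom P (wact S) t"
    thus "ple S x y \<longrightarrow> x \<in> pa_dom P (wact S) t"
      using x t projI[of "wval S t"] ple_trans[of x y "st (wval S t)"] by (auto simp: dom_char) }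
  { assume "y \<in> pa_ran P (wact S) t"
    thus "ple S x y \<longrightarrow> x \<in> pa_ran P (wact S) t"
      using x t projI2[of "wval S t"] ple_trans[of x y "pl (wval S t)"] by (auto simp: ran_char) }
qed

lemma axB_ord: assumes t: "t \<in> words A" and x: "x \<in> P" "ple S x (st (wval S t))"
  and y: "y \<in> P" "ple S y (st (wval S t))"
  shows "ple S x y \<longleftrightarrow> ple S (pl (wval S t \<cdot> x)) (pl (wval S t \<cdot> y))"
proof
  assume xy: "ple S x y"
  have "wval S t \<cdot> x = wval S t \<cdot> (x \<cdot> y)" using pleD[OF xy] by simp
  also have "\<dots> = (wval S t \<cdot> y) \<cdot> x" using proj_comm[of x y] x y t by (simp add: assoc)
  finally show "ple S (pl (wval S t \<cdot> x)) (pl (wval S t \<cdot> y))"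
    using G1'[of "wval S t \<cdot> y" x] x y t by simp
next
  assume fg: "ple S (pl (wval S t \<cdot> x)) (pl (wval S t \<cdot> y))"
  define f where "f = pl (wval S t \<cdot> x)"
  define g where "g = pl (wval S t \<cdot> y)"
  have fP: "f \<in> P" "g \<in> P" unfolding f_def g_def using x y t projI2 by auto
  have "f \<cdot> wval S t = (f \<cdot> g) \<cdot> wval S t" using pleD[OF fg] unfolding f_def g_def by simp
  also have "\<dots> = f \<cdot> (g \<cdot> wval S t)" using fP t by (simp add: assoc)
  finally have "st (f \<cdot> wval S t) = st (f \<cdot> (g \<cdot> wval S t))" by (rule arg_cong)
  hence "ple S (st (f \<cdot> wval S t)) (st (g \<cdot> wval S t))" using st_le_mul[of "g \<cdot> wval S t" f] fP t by simp
  moreover have "st (f \<cdot> wval S t) = x" unfolding f_def using R1 x t by simp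
  moreover have "st (g \<cdot> wval S t) = y" unfolding g_def using R1 y t by simp
  ultimately show "ple S x y" by simp
qed

lemma axB_bij: assumes t: "t \<in> words A"
  shows "bij_betw (\<lambda>y. the (wact S t y)) (pa_dom P (wact S) t) (pa_ran P (wact S) t)"
  proof (rule bij_betw_byWitness[where f'="\<lambda>f. st (f \<cdot> wval S t)"])
    show "\<forall>a\<in>pa_dom P (wact S) t. st (the (wact S t a) \<cdot> wval S t) = a"
      using t R1 by (auto simp: dom_char wactS)
    show "\<forall>a'\<in>pa_ran P (wact S) t. the (wact S t (st (a' \<cdot> wval S t))) = a'"
      using t R2 st_le_mul projI by (auto simp: ran_char wactS)
    show "(\<lambda>y. the (wact S t y)) ` pa_dom P (wact S) t \<subseteq> pa_ran P (wact S) t"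
      using t G1' projI2 by (auto simp: dom_char ran_char wactS)
    show "(\<lambda>f. st (f \<cdot> wval S t)) ` pa_ran P (wact S) t \<subseteq> pa_dom P (wact S) t"
      using t st_le_mul projI by (auto simp: dom_char ran_char)
  qed

lemma axB_ord2: assumes t: "t \<in> words A"
  shows "\<forall>x\<in>pa_dom P (wact S) t. \<forall>y\<in>pa_dom P (wact S) t.
          ple S x y = ple S (the (wact S t x)) (the (wact S t y))"
    using t axB_ord by (auto simp: dom_char wactS)

lemma axB: "axiom_B (words A) P (ple S) (wact S)"
  unfolding axiom_B_def using axB_bij axB_ord2 by blast

lemma axC: "axiom_C (words A) P (wact S)"
  unfolding axiom_C_def dom_char
proof (intro ballI)
  fix t assume "t \<in> words A"
  hence "st (wval S t) \<in> {e \<in> P. ple S e (st (wval S t))}" using projI ple_refl by simp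
  thus "{e \<in> P. ple S e (st (wval S t))} \<noteq> {}" by blast
qed


abbreviation MM where "MM \<equiv> MTE S A"

lemma MTE_car: "x \<in> car MM \<longleftrightarrow> snd x \<in> words A \<and> fst x \<in> P \<and> ple S (fst x) (pl (wval S (snd x)))"
proof -
  obtain y t where x: "x = (y, t)" by fastforce
  have "x \<in> car MM \<longleftrightarrow> t \<in> words A \<and> y \<in> pa_ran P (wact S) t"
    unfolding x MTE_def Mmon_def by simp
  also have "\<dots> \<longleftrightarrow> t \<in> words A \<and> y \<in> P \<and> ple S y (pl (wval S t))"
    using ran_char by auto
  finally show ?thesis using x by simp
qed

lemma MTE_carI: "t \<in> words A \<Longrightarrow> y \<in> P \<Longrightarrow> ple S y (pl (wval S t)) \<Longrightarrow> (y, t) \<in> car MM"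
  by (simp add: MTE_car)
lemma MTE_carD: "(y, t) \<in> car MM \<Longrightarrow> t \<in> words A \<and> y \<in> P \<and> ple S y (pl (wval S t))"
  by (simp add: MTE_car)

lemma MTE_idt: "idt MM = (one, [])" by (simp add: MTE_def Mmon_def)
lemma MTE_rp: "rp MM (y, t) = (y, [])" by (simp add: MTE_def Mmon_def)
lemma MTE_rs: "(y, t) \<in> car MM \<Longrightarrow> rs MM (y, t) = (st (y \<cdot> wval S t), [])"
  using MTE_carD[of y t] rev_char[of t y] by (simp add: MTE_def Mmon_def)

lemma MTE_mul: assumes xs: "(x, s) \<in> car MM" and y: "y \<in> P"
  shows "mul MM (x, s) (y, t) = (pl (x \<cdot> wval S s \<cdot> y), s @ t)"
proof -
  have h: "s \<in> words A" "x \<in> P" "ple S x (pl (wval S s))" using MTE_carD[OF xs] by auto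
  define r where "r = st (x \<cdot> wval S s)"
  have rev: "pa_rev P (wact S) s x = r" unfolding r_def using rev_char h by simp
  have rP: "r \<in> P" unfolding r_def using h projI by simp
  have rle: "ple S r (st (wval S s))" unfolding r_def using st_le_mul h by simp
  have ryP: "r \<cdot> y \<in> P" using rP y by simp
  have ryle: "ple S (r \<cdot> y) (st (wval S s))"
    using ple_trans[OF ryP rP _ ple_meet1[OF rP y] rle] h projI by simp
  have "wact S s (r \<cdot> y) = Some (pl (wval S s \<cdot> (r \<cdot> y)))" using wactS[OF ryP ryle] .
  moreover have "wval S s \<cdot> (r \<cdot> y) = x \<cdot> wval S s \<cdot> y"
  proof -
    have "wval S s \<cdot> (r \<cdot> y) = (wval S s \<cdot> r) \<cdot> y" using h rP y by (simp add: assoc)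
    also have "wval S s \<cdot> r = x \<cdot> wval S s" unfolding r_def using F3[of "wval S s" x] h by simp
    finally show ?thesis .
  qed
  ultimately show ?thesis using rev by (simp add: MTE_def Mmon_def)
qed

lemma Kid: "x \<in> P \<Longrightarrow> y \<in> P \<Longrightarrow> a \<in> C \<Longrightarrow> b \<in> C \<Longrightarrow> pl (x \<cdot> a \<cdot> y) \<cdot> (a \<cdot> b) = x \<cdot> a \<cdot> (y \<cdot> b)"
proof -
  assume h: "x \<in> P" "y \<in> P" "a \<in> C" "b \<in> C"
  have "pl (x \<cdot> a \<cdot> y) = pl (x \<cdot> (a \<cdot> y))" using h by (simp add: assoc)
  also have "\<dots> = x \<cdot> pl (a \<cdot> y)" using F4[of "a \<cdot> y" x] h by simp
  finally have 1: "pl (x \<cdot> a \<cdot> y) \<cdot> (a \<cdot> b) = x \<cdot> (pl (a \<cdot> y) \<cdot> a) \<cdot> b" using h by (simp add: assoc)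
  have "pl (a \<cdot> y) \<cdot> a = a \<cdot> y" using F2[of a y] h by simp
  with 1 show ?thesis using h by (simp add: assoc)
qed

lemma MTE_cl_mul: assumes xs: "(x, s) \<in> car MM" and yt: "(y, t) \<in> car MM"
  shows "mul MM (x, s) (y, t) \<in> car MM"
proof -
  have h: "s \<in> words A" "x \<in> P" "ple S x (pl (wval S s))" using MTE_carD[OF xs] by auto
  have k: "t \<in> words A" "y \<in> P" "ple S y (pl (wval S t))" using MTE_carD[OF yt] by auto
  define a where "a = wval S s"
  define b where "b = wval S t"
  have ab: "a \<in> C" "b \<in> C" unfolding a_def b_def using h k by auto
  have y0: "y = y \<cdot> pl b" using pleD[OF k(3)] unfolding b_def .
  have "y \<cdot> pl b = pl b \<cdot> y" using proj_comm[of y "pl b"] k projI2 ab by simp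
  with y0 have y1: "y = pl b \<cdot> y" by (rule trans)
  have "a \<cdot> y = a \<cdot> (pl b \<cdot> y)" using y1 by (rule arg_cong)
  also have "\<dots> = (a \<cdot> pl b) \<cdot> y" using ab k by (simp add: assoc)
  finally have "a \<cdot> y = (a \<cdot> pl b) \<cdot> y" .
  hence "pl (a \<cdot> y) = pl ((a \<cdot> pl b) \<cdot> y)" by (rule arg_cong)
  hence l1: "ple S (pl (a \<cdot> y)) (pl (a \<cdot> pl b))" using G1'[of "a \<cdot> pl b" y] ab k by simp
  have l2: "pl (a \<cdot> pl b) = pl (a \<cdot> b)" using C2 ab by simp
  have e: "pl (x \<cdot> a \<cdot> y) = x \<cdot> pl (a \<cdot> y)" using F4[of "a \<cdot> y" x] h k ab by (simp add: assoc)
  have "ple S (x \<cdot> pl (a \<cdot> y)) (pl (a \<cdot> y))" using ple_meet2 h k ab projI2 by simp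
  hence "ple S (pl (x \<cdot> a \<cdot> y)) (pl (a \<cdot> b))"
    using e l1 l2 ple_trans[of "x \<cdot> pl (a \<cdot> y)" "pl (a \<cdot> y)" "pl (a \<cdot> b)"] h k ab projI2 by simp
  moreover have "pl (x \<cdot> a \<cdot> y) \<in> P" using projI2 h k ab by simp
  ultimately show ?thesis using MTE_mul[OF xs k(2)] h k unfolding a_def b_def
    by (simp add: MTE_car wval_append)
qed

lemma MTE_cl_rs: assumes yt: "(y, t) \<in> car MM" shows "rs MM (y, t) \<in> car MM"
proof -
  have k: "t \<in> words A" "y \<in> P" using MTE_carD[OF yt] by auto
  have "st (y \<cdot> wval S t) \<in> P" using k projI by simp
  hence "(st (y \<cdot> wval S t), []) \<in> car MM" using ple_one by (intro MTE_carI) simp_all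
  thus ?thesis using MTE_rs[OF yt] by simp
qed
lemma MTE_cl_rp: assumes yt: "(y, t) \<in> car MM" shows "rp MM (y, t) \<in> car MM"
proof -
  have k: "y \<in> P" using MTE_carD[OF yt] by auto
  hence "(y, []) \<in> car MM" using ple_one by (intro MTE_carI) simp_all
  thus ?thesis by (simp add: MTE_rp)
qed
lemma MTE_cl_idt: "idt MM \<in> car MM"
  unfolding MTE_idt using ple_one by (intro MTE_carI) simp_all


definition Qm :: "('a \<times> 'a list) rmonoid" where
  "Qm = \<lparr>car = C \<times> UNIV, mul = (\<lambda>(a, s) (b, t). (a \<cdot> b, s @ t)), rs = (\<lambda>(a, s). (st a, [])),
         rp = (\<lambda>(a, s). (pl a, [])), idt = (one, [])\<rparr>"

lemma Qm_rm: "restriction_monoid Qm"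
  unfolding restriction_monoid_def restriction_semigroup_def
proof (intro conjI ballI)
  fix x y z assume h: "x \<in> car Qm" "y \<in> car Qm" "z \<in> car Qm"
  obtain a s b t c u where xyz: "x = (a, s)" "y = (b, t)" "z = (c, u)" by (cases x, cases y, cases z) auto
  have abc: "a \<in> C" "b \<in> C" "c \<in> C" using h xyz by (auto simp: Qm_def)
  show "mul Qm (mul Qm x y) z = mul Qm x (mul Qm y z)" using abc by (simp add: xyz Qm_def assoc)
next
  fix x y assume h: "x \<in> car Qm" "y \<in> car Qm"
  obtain a s b t where xy: "x = (a, s)" "y = (b, t)" by (cases x, cases y) auto
  have ab: "a \<in> C" "b \<in> C" using h xy by (auto simp: Qm_def)
  show "mul Qm x y \<in> car Qm" using ab by (simp add: xy Qm_def)
  show "mul Qm x (rs Qm x) = x" using ax1[OF ab] by (simp add: xy Qm_def)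
  show "mul Qm (rs Qm x) (rs Qm y) = mul Qm (rs Qm y) (rs Qm x)" using ax2[OF ab] by (simp add: xy Qm_def)
  show "rs Qm (mul Qm x (rs Qm y)) = mul Qm (rs Qm x) (rs Qm y)" using ax3[OF ab] by (simp add: xy Qm_def)
  show "mul Qm (rs Qm x) y = mul Qm y (rs Qm (mul Qm x y))" using ax4[OF ab] by (simp add: xy Qm_def)
  show "mul Qm (rp Qm x) x = x" using ax5[OF ab] by (simp add: xy Qm_def)
  show "mul Qm (rp Qm x) (rp Qm y) = mul Qm (rp Qm y) (rp Qm x)" using ax6[OF ab] by (simp add: xy Qm_def)
  show "rp Qm (mul Qm (rp Qm x) y) = mul Qm (rp Qm x) (rp Qm y)" using ax7[OF ab] by (simp add: xy Qm_def)
  show "mul Qm x (rp Qm y) = mul Qm (rp Qm (mul Qm x y)) x" using ax8[OF ab] by (simp add: xy Qm_def)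
  show "rs Qm (rp Qm x) = rp Qm x" using ab by (simp add: xy Qm_def)
  show "rp Qm (rs Qm x) = rs Qm x" using ab by (simp add: xy Qm_def)
next
  fix x assume h: "x \<in> car Qm"
  obtain a s where xy: "x = (a, s)" by (cases x) auto
  have ab: "a \<in> C" using h xy by (auto simp: Qm_def)
  show "rs Qm x \<in> car Qm" "rp Qm x \<in> car Qm" "mul Qm (idt Qm) x = x" "mul Qm x (idt Qm) = x"
    using ab by (simp_all add: xy Qm_def)
next
  show "idt Qm \<in> car Qm" by (simp add: Qm_def)
qed


definition gmap :: "'a \<times> 'a list \<Rightarrow> 'a \<times> 'a list" where
  "gmap = (\<lambda>(y, t). (y \<cdot> wval S t, t))"

lemma pl_yt: assumes yt: "(y, t) \<in> car MM" shows "pl (y \<cdot> wval S t) = y"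
proof -
  have k: "t \<in> words A" "y \<in> P" "ple S y (pl (wval S t))" using MTE_carD[OF yt] by auto
  have "pl (y \<cdot> wval S t) = y \<cdot> pl (wval S t)" using F4 k by simp
  also have "\<dots> = y" using pleD[OF k(3)] by simp
  finally show ?thesis .
qed

lemma cl1: "x \<in> car MM \<Longrightarrow> y \<in> car MM \<Longrightarrow> mul MM x y \<in> car MM"
  using MTE_cl_mul by (cases x; cases y) auto
lemma cl2: "x \<in> car MM \<Longrightarrow> rs MM x \<in> car MM"
  using MTE_cl_rs by (cases x) auto
lemma cl3: "x \<in> car MM \<Longrightarrow> rp MM x \<in> car MM"
  using MTE_cl_rp by (cases x) auto

lemma g_mul: assumes "(x, s) \<in> car MM" "(y, t) \<in> car MM"
  shows "gmap (mul MM (x, s) (y, t)) = mul Qm (gmap (x, s)) (gmap (y, t))"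
proof -
  have h: "s \<in> words A" "x \<in> P" using MTE_carD[OF assms(1)] by auto
  have k: "t \<in> words A" "y \<in> P" using MTE_carD[OF assms(2)] by auto
  have "pl (x \<cdot> wval S s \<cdot> y) \<cdot> wval S (s @ t) = x \<cdot> wval S s \<cdot> (y \<cdot> wval S t)"
    using Kid[of x y "wval S s" "wval S t"] h k by (simp add: wval_append)
  thus ?thesis using MTE_mul[OF assms(1) k(2)] by (simp add: gmap_def Qm_def)
qed

lemma g_hom:
  "\<And>x y. x \<in> car MM \<Longrightarrow> y \<in> car MM \<Longrightarrow> gmap (mul MM x y) = mul Qm (gmap x) (gmap y)"
  "\<And>x. x \<in> car MM \<Longrightarrow> gmap (rs MM x) = rs Qm (gmap x)"
  "\<And>x. x \<in> car MM \<Longrightarrow> gmap (rp MM x) = rp Qm (gmap x)"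
  "gmap (idt MM) = idt Qm"
proof -
  fix x y assume "x \<in> car MM" "y \<in> car MM"
  thus "gmap (mul MM x y) = mul Qm (gmap x) (gmap y)" using g_mul by (cases x; cases y) auto
next
  fix x assume x: "x \<in> car MM"
  obtain y t where xe: "x = (y, t)" by fastforce
  have k: "t \<in> words A" "y \<in> P" using MTE_carD x xe by auto
  show "gmap (rs MM x) = rs Qm (gmap x)" using x k unfolding xe
    by (simp add: MTE_rs gmap_def Qm_def projI)
  show "gmap (rp MM x) = rp Qm (gmap x)" using x k pl_yt unfolding xe
    by (simp add: MTE_rp gmap_def Qm_def)
next
  show "gmap (idt MM) = idt Qm" by (simp add: MTE_idt gmap_def Qm_def)
qed

lemma g_inj: "inj_on gmap (car MM)"
proof (rule inj_onI)
  fix x y assume x: "x \<in> car MM" and y: "y \<in> car MM" and e: "gmap x = gmap y"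
  obtain a s b t where xy: "x = (a, s)" "y = (b, t)" by (cases x, cases y) auto
  have st: "s = t" "a \<cdot> wval S s = b \<cdot> wval S t" using e xy by (auto simp: gmap_def)
  have "a = pl (a \<cdot> wval S s)" using pl_yt x xy by simp
  also have "\<dots> = pl (b \<cdot> wval S t)" using st by simp
  also have "\<dots> = b" using pl_yt y xy by simp
  finally show "x = y" using xy st by simp
qed

lemma g_car: "x \<in> car MM \<Longrightarrow> gmap x \<in> car Qm"
  using MTE_carD by (cases x) (auto simp: gmap_def Qm_def)

lemma MTE_rm: "restriction_monoid MM"
  by (rule rm_embed[OF Qm_rm cl1 cl2 cl3 MTE_cl_idt g_car g_inj g_hom])


lemma hmap_eq: "(\<lambda>(e, v). e \<cdot> wval S v) = fst \<circ> gmap" by (auto simp: gmap_def fun_eq_iff)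

lemma MTE_rhom: "rhom MM S (\<lambda>(e, v). e \<cdot> wval S v)"
  unfolding rhom_def hmap_eq
proof (intro conjI ballI)
  show "(fst \<circ> gmap) ` car MM \<subseteq> C" using g_car by (auto simp: Qm_def mem_Times_iff)
  fix x assume x: "x \<in> car MM"
  show "(fst \<circ> gmap) (rs MM x) = st ((fst \<circ> gmap) x)"
    using g_hom(2)[OF x] by (cases "gmap x") (simp add: Qm_def)
  show "(fst \<circ> gmap) (rp MM x) = pl ((fst \<circ> gmap) x)"
    using g_hom(3)[OF x] by (cases "gmap x") (simp add: Qm_def)
  fix y assume y: "y \<in> car MM"
  show "(fst \<circ> gmap) (mul MM x y) = (fst \<circ> gmap) x \<cdot> (fst \<circ> gmap) y"
    using g_hom(1)[OF x y] by (cases "gmap x"; cases "gmap y") (simp add: Qm_def)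
next
  show "(fst \<circ> gmap) (idt MM) = one" using g_hom(4) by (simp add: Qm_def)
qed

lemma gen_nf: "x \<in> gen_by S A \<Longrightarrow> \<exists>e v. e \<in> P \<and> v \<in> words A \<and> x = e \<cdot> wval S v"
proof (induction rule: gen_by.induct)
  case (gen_base a)
  hence a: "a \<in> C" "[a] \<in> words A" using Asub by (auto simp: words_def)
  have "wval S [a] = a" using a by (simp add: wval_def)
  hence "a = one \<cdot> wval S [a]" using a by simp
  thus ?case using a(2) one_P by blast
next
  case gen_one
  thus ?case by (intro exI[of _ one] exI[of _ "[]"]) simp
next
  case (gen_mul x y)
  then obtain e u f v where h: "e \<in> P" "u \<in> words A" "x = e \<cdot> wval S u"
    "f \<in> P" "v \<in> words A" "y = f \<cdot> wval S v" by blast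
  define U where "U = wval S u"
  define V where "V = wval S v"
  have UV: "U \<in> C" "V \<in> C" using h unfolding U_def V_def by auto
  have F: "U \<cdot> f = pl (U \<cdot> f) \<cdot> U" using F2 h UV by simp
  have "x \<cdot> y = e \<cdot> (U \<cdot> f) \<cdot> V" using h UV unfolding U_def[symmetric] V_def[symmetric] by (simp add: assoc)
  also have "\<dots> = e \<cdot> (pl (U \<cdot> f) \<cdot> U) \<cdot> V" by (simp only: F[symmetric])
  also have "\<dots> = (e \<cdot> pl (U \<cdot> f)) \<cdot> (U \<cdot> V)" using h UV projI2 by (simp add: assoc)
  finally have "x \<cdot> y = (e \<cdot> pl (wval S u \<cdot> f)) \<cdot> wval S (u @ v)"
    using h unfolding U_def V_def by (simp add: wval_append)
  moreover have "e \<cdot> pl (wval S u \<cdot> f) \<in> P"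
    by (rule proj_mul[OF h(1) projI2[OF mul_c[OF wval_c[OF h(2)] proj_c[OF h(4)]]]])
  ultimately show ?case using h(2,5) by (intro exI[of _ "e \<cdot> pl (wval S u \<cdot> f)"] exI[of _ "u @ v"]) simp
next
  case (gen_rs x)
  then obtain e u where h: "e \<in> P" "u \<in> words A" "x = e \<cdot> wval S u" by blast
  hence "x \<in> C" by simp
  hence "st x \<in> P" by (rule projI)
  thus ?case by (intro exI[of _ "st x"] exI[of _ "[]"]) simp
next
  case (gen_rp x)
  then obtain e u where h: "e \<in> P" "u \<in> words A" "x = e \<cdot> wval S u" by blast
  hence "x \<in> C" by simp
  hence "pl x \<in> P" by (rule projI2)
  thus ?case by (intro exI[of _ "pl x"] exI[of _ "[]"]) simp
qed

lemma MTE_surj: assumes gen: "C = gen_by S A"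
  shows "(\<lambda>(e, v). e \<cdot> wval S v) ` car MM = C"
proof
  show "(\<lambda>(e, v). e \<cdot> wval S v) ` car MM \<subseteq> C" using MTE_rhom by (simp add: rhom_def)
  show "C \<subseteq> (\<lambda>(e, v). e \<cdot> wval S v) ` car MM"
  proof
    fix x assume "x \<in> C"
    then obtain e v where h: "e \<in> P" "v \<in> words A" "x = e \<cdot> wval S v" using gen_nf gen by blast
    have m: "(e \<cdot> pl (wval S v), v) \<in> car MM"
      using h projI2 ple_meet2 by (intro MTE_carI) simp_all
    have "e \<cdot> pl (wval S v) \<cdot> wval S v = x" using h ax5[of "wval S v" one] by (simp add: assoc)
    thus "x \<in> (\<lambda>(e, v). e \<cdot> wval S v) ` car MM" using m by force
  qed
qed

lemma proj_MM: "p \<in> proj MM \<longleftrightarrow> (\<exists>e\<in>P. p = (e, []))"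
proof
  assume "p \<in> proj MM"
  then obtain x where x: "x \<in> car MM" "p = rs MM x" unfolding proj_def by blast
  obtain y t where xe: "x = (y, t)" by fastforce
  have "t \<in> words A" "y \<in> P" using MTE_carD x xe by auto
  thus "\<exists>e\<in>P. p = (e, [])" using x xe MTE_rs projI by auto
next
  assume "\<exists>e\<in>P. p = (e, [])"
  then obtain e where e: "e \<in> P" "p = (e, [])" by blast
  have m: "(e, []) \<in> car MM" using e ple_one by (intro MTE_carI) simp_all
  have "rs MM (e, []) = (e, [])" using MTE_rs[OF m] e by simp
  thus "p \<in> proj MM" unfolding proj_def using m e by force
qed

lemma MTE_psep: "projection_separating MM (\<lambda>(e, v). e \<cdot> wval S v)"
  unfolding projection_separating_def
proof (rule inj_onI)
  fix p q assume "p \<in> proj MM" "q \<in> proj MM" and eq: "(\<lambda>(e, v). e \<cdot> wval S v) p = (\<lambda>(e, v). e \<cdot> wval S v) q"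
  then obtain e f where "e \<in> P" "f \<in> P" "p = (e, [])" "q = (f, [])" using proj_MM by blast
  thus "p = q" using eq by simp
qed

lemma MTE_ample: "ample MM"
  unfolding ample_def
proof (intro ballI conjI impI)
  fix a b c assume a: "a \<in> car MM" and b: "b \<in> car MM" and c: "c \<in> car MM"
  obtain x s y s' z t where e: "a = (x, s)" "b = (y, s')" "c = (z, t)"
    by (cases a, cases b, cases c) auto
  have A1: "s \<in> words A" "x \<in> P" using MTE_carD a e by auto
  have B1: "s' \<in> words A" "y \<in> P" using MTE_carD b e by auto
  have C1: "t \<in> words A" "z \<in> P" using MTE_carD c e by auto
  { assume "mul MM a c = mul MM b c"
    hence "pl (x \<cdot> wval S s \<cdot> z) = pl (y \<cdot> wval S s' \<cdot> z)" "s = s'"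
      using MTE_mul a b C1 e by auto
    thus "mul MM a (rp MM c) = mul MM b (rp MM c)"
      using MTE_mul a b C1 e by (simp add: MTE_rp) }
  { assume "mul MM c a = mul MM c b"
    hence eq: "pl (z \<cdot> wval S t \<cdot> x) = pl (z \<cdot> wval S t \<cdot> y)" "s = s'"
      using MTE_mul c A1 B1 e by auto
    define r where "r = st (z \<cdot> wval S t)"
    have rP: "r \<in> P" unfolding r_def using C1 projI by simp
    have rle: "ple S r (st (wval S t))" unfolding r_def using st_le_mul C1 by simp
    have zt: "z \<cdot> wval S t = wval S t \<cdot> r" unfolding r_def using F3 C1 by simp
    have key: "\<And>w. w \<in> P \<Longrightarrow> st (pl (z \<cdot> wval S t \<cdot> w) \<cdot> wval S t) = r \<cdot> w"
    proof -
      fix w assume w: "w \<in> P"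
      have "z \<cdot> wval S t \<cdot> w = wval S t \<cdot> (r \<cdot> w)" using zt rP w C1 by (simp add: assoc)
      moreover have "ple S (r \<cdot> w) (st (wval S t))"
        using ple_trans[OF _ rP _ ple_meet1[OF rP w] rle] rP w C1 projI by simp
      ultimately show "st (pl (z \<cdot> wval S t \<cdot> w) \<cdot> wval S t) = r \<cdot> w"
        using R1[of "wval S t" "r \<cdot> w"] rP w C1 by simp
    qed
    have "r \<cdot> x = r \<cdot> y" using key[OF A1(2)] key[OF B1(2)] eq(1) by simp
    moreover have "rs MM c = (r, [])" using MTE_rs c e unfolding r_def by simp
    moreover have "(r, []) \<in> car MM" using rP ple_one by (intro MTE_carI) simp_all
    ultimately show "mul MM (rs MM c) a = mul MM (rs MM c) b"
      using MTE_mul A1 B1 rP e eq(2) by simp }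
qed


lemma MTE_snd_mul: "snd (mul MM x y) = snd x @ snd y"
  by (cases x; cases y) (simp add: MTE_def Mmon_def)
lemma MTE_snd_rs: "snd (rs MM x) = []"
  by (cases x) (simp add: MTE_def Mmon_def)
lemma MTE_snd_rp: "snd (rp MM x) = []"
  by (cases x) (simp add: MTE_def Mmon_def)

definition R0 where "R0 = {(a, b). a \<in> car MM \<and> b \<in> car MM \<and> snd a = snd b}"

lemma R0_cong: "rcong MM R0"
  unfolding rcong_def
proof (intro conjI allI impI)
  show "equiv (car MM) R0"
    by (rule equivI) (auto simp: R0_def refl_on_def sym_def trans_def)
next
  fix a b c assume h: "(a, b) \<in> R0 \<and> c \<in> car MM"
  thus "(mul MM a c, mul MM b c) \<in> R0" "(mul MM c a, mul MM c b) \<in> R0"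
    using cl1 by (auto simp: R0_def MTE_snd_mul)
next
  fix a b assume h: "(a, b) \<in> R0"
  thus "(rs MM a, rs MM b) \<in> R0" "(rp MM a, rp MM b) \<in> R0"
    using cl2 cl3 by (auto simp: R0_def MTE_snd_rs MTE_snd_rp)
qed

lemma proj_MM_car: "p \<in> proj MM \<Longrightarrow> p \<in> car MM"
  unfolding proj_def using cl2 by auto

lemma R0_proj: "proj MM \<times> proj MM \<subseteq> R0"
proof
  fix x assume "x \<in> proj MM \<times> proj MM"
  then obtain p q where pq: "x = (p, q)" "p \<in> proj MM" "q \<in> proj MM" by blast
  then obtain e f where "p = (e, [])" "q = (f, [])" using proj_MM by blast
  thus "x \<in> R0" using pq proj_MM_car by (auto simp: R0_def)
qed

lemma proj_pair: "e \<in> P \<Longrightarrow> (e, []) \<in> proj MM" using proj_MM by blast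
lemma car_pair: "e \<in> P \<Longrightarrow> (e, []) \<in> car MM" using proj_MM_car proj_pair by blast

lemma mul_pair: assumes e: "e \<in> P" and yt: "(y, t) \<in> car MM"
  shows "mul MM (e, []) (y, t) = (e \<cdot> y, t)"
proof -
  have y: "y \<in> P" using MTE_carD[OF yt] by simp
  show ?thesis using MTE_mul[OF car_pair[OF e] y] e y by simp
qed

lemma sigma_MM: "sigma MM = R0"
proof
  show "sigma MM \<subseteq> R0" unfolding sigma_def using R0_cong R0_proj by blast
  show "R0 \<subseteq> sigma MM"
    unfolding sigma_def
  proof (rule Inter_greatest)
    fix R assume "R \<in> {R. rcong MM R \<and> proj MM \<times> proj MM \<subseteq> R}"
    hence R: "rcong MM R" "proj MM \<times> proj MM \<subseteq> R" by auto
    have eq: "equiv (car MM) R" and cp: "\<And>a b c. (a, b) \<in> R \<Longrightarrow> c \<in> car MM \<Longrightarrow> (mul MM a c, mul MM b c) \<in> R"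
      using R(1) unfolding rcong_def by blast+
    have sy: "\<And>a b. (a, b) \<in> R \<Longrightarrow> (b, a) \<in> R" using eq unfolding equiv_def sym_def by blast
    have tr: "\<And>a b c. (a, b) \<in> R \<Longrightarrow> (b, c) \<in> R \<Longrightarrow> (a, c) \<in> R" using eq unfolding equiv_def trans_def by blast
    have key: "\<And>e f t. (e, t) \<in> car MM \<Longrightarrow> (f, t) \<in> car MM \<Longrightarrow> ((e \<cdot> f, t), (f, t)) \<in> R"
    proof -
      fix e f t assume et: "(e, t) \<in> car MM" and ft: "(f, t) \<in> car MM"
      have eP: "e \<in> P" and fP: "f \<in> P" using MTE_carD et ft by auto
      have "((e, []), (one, [])) \<in> R" using R(2) proj_pair eP one_P by blast
      hence "(mul MM (e, []) (f, t), mul MM (one, []) (f, t)) \<in> R" using cp ft by blast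
      thus "((e \<cdot> f, t), (f, t)) \<in> R" using mul_pair[OF eP ft] mul_pair[OF one_P ft] fP by simp
    qed
    show "R0 \<subseteq> R"
    proof
      fix x assume "x \<in> R0"
      then obtain e t f t' where x: "x = ((e, t), (f, t'))" "(e, t) \<in> car MM" "(f, t') \<in> car MM" "t = t'"
        unfolding R0_def by auto
      have eP: "e \<in> P" and fP: "f \<in> P" using MTE_carD x by auto
      have 1: "((e \<cdot> f, t), (f, t)) \<in> R" using key x by simp
      have 2: "((f \<cdot> e, t), (e, t)) \<in> R" using key x by simp
      have "f \<cdot> e = e \<cdot> f" using proj_comm eP fP by simp
      hence "((e, t), (e \<cdot> f, t)) \<in> R" using sy[OF 2] by simp
      thus "x \<in> R" using tr[OF _ 1] x by simp
    qed
  qed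
qed

lemma MTE_proper: "proper MM"
  unfolding proper_def
proof (intro ballI conjI impI)
  fix a b assume a: "a \<in> car MM" and b: "b \<in> car MM"
  obtain x s y t where e: "a = (x, s)" "b = (y, t)" by (cases a, cases b) auto
  have A1: "s \<in> words A" "x \<in> P" "ple S x (pl (wval S s))" using MTE_carD a e by auto
  have B1: "t \<in> words A" "y \<in> P" "ple S y (pl (wval S t))" using MTE_carD b e by auto
  { assume h: "rs MM a = rs MM b \<and> (a, b) \<in> sigma MM"
    hence st: "s = t" using e by (simp add: sigma_MM R0_def)
    have "st (x \<cdot> wval S s) = st (y \<cdot> wval S t)" using h a b e MTE_rs by simp
    hence "pl (wval S s \<cdot> st (x \<cdot> wval S s)) = pl (wval S s \<cdot> st (y \<cdot> wval S s))" using st by simp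
    hence "x = y" using R2 A1 B1 st by simp
    thus "a = b" using e st by simp }
  { assume h: "rp MM a = rp MM b \<and> (a, b) \<in> sigma MM"
    hence "s = t" using e by (simp add: sigma_MM R0_def)
    thus "a = b" using h e by (simp add: MTE_rp) }
qed

lemma nleq_pair: assumes e: "e \<in> P" and g: "g \<in> P"
  shows "nleq MM (e, []) (g, []) \<longleftrightarrow> ple S e g"
proof
  assume "nleq MM (e, []) (g, [])"
  then obtain r where r: "r \<in> proj MM" "(e, []) = mul MM r (g, [])" unfolding nleq_def by blast
  then obtain w where w: "w \<in> P" "r = (w, [])" using proj_MM by blast
  have "(e, []) = (w \<cdot> g, [])" using r w mul_pair[OF w(1) car_pair[OF g]] by simp
  hence "e = w \<cdot> g" by simp
  thus "ple S e g" using w g ple_meet2 by simp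
next
  assume "ple S e g"
  hence "e = e \<cdot> g" by (rule pleD)
  hence "(e, []) = mul MM (e, []) (g, [])" using mul_pair[OF e car_pair[OF g]] by simp
  thus "nleq MM (e, []) (g, [])" unfolding nleq_def using proj_pair[OF e] by blast
qed

lemma MTE_F: "F_restriction MM"
  unfolding F_restriction_def
proof (intro ballI)
  fix a assume a: "a \<in> car MM"
  obtain y t where e: "a = (y, t)" by fastforce
  have A1: "t \<in> words A" using MTE_carD a e by auto
  have m: "(pl (wval S t), t) \<in> car MM" using A1 projI2 ple_refl by (intro MTE_carI) simp_all
  show "\<exists>m\<in>sigma MM `` {a}. \<forall>b\<in>sigma MM `` {a}. nleq MM b m"
  proof (intro bexI ballI)
    show "(pl (wval S t), t) \<in> sigma MM `` {a}" using a m e by (simp add: sigma_MM R0_def)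
    fix b assume "b \<in> sigma MM `` {a}"
    hence b: "b \<in> car MM" "snd b = t" using e by (auto simp: sigma_MM R0_def)
    obtain z where bz: "b = (z, t)" using b by (cases b) auto
    have B1: "z \<in> P" "ple S z (pl (wval S t))" using MTE_carD b bz by auto
    have "mul MM (z, []) (pl (wval S t), t) = (z \<cdot> pl (wval S t), t)" using mul_pair[OF B1(1) m] .
    also have "\<dots> = b" using pleD[OF B1(2)] bz by simp
    finally show "nleq MM b (pl (wval S t), t)" unfolding nleq_def using proj_pair[OF B1(1)] by metis
  qed
qed


definition cls where "cls t = {b \<in> car MM. snd b = t}"

lemma sig_img: "x \<in> car MM \<Longrightarrow> sigma MM `` {x} = cls (snd x)"
  by (auto simp: sigma_MM R0_def cls_def)

lemma cls_ne: "t \<in> words A \<Longrightarrow> (pl (wval S t), t) \<in> cls t"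
  unfolding cls_def using projI2 ple_refl by (simp add: MTE_car)

lemma cls_car: "b \<in> cls t \<Longrightarrow> b \<in> car MM" by (simp add: cls_def)
lemma cls_snd: "b \<in> cls t \<Longrightarrow> snd b = t" by (simp add: cls_def)

lemma quot: "car MM // sigma MM = cls ` words A"
proof
  show "car MM // sigma MM \<subseteq> cls ` words A"
  proof
    fix X assume "X \<in> car MM // sigma MM"
    then obtain x where x: "x \<in> car MM" "X = sigma MM `` {x}" unfolding quotient_def by blast
    hence "X = cls (snd x)" using sig_img by simp
    moreover have "snd x \<in> words A" using MTE_car x by simp
    ultimately show "X \<in> cls ` words A" by blast
  qed
  show "cls ` words A \<subseteq> car MM // sigma MM"
  proof
    fix X assume "X \<in> cls ` words A"
    then obtain t where t: "t \<in> words A" "X = cls t" by blast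
    have m: "(pl (wval S t), t) \<in> car MM" using cls_ne[OF t(1)] cls_car by blast
    have "X = sigma MM `` {(pl (wval S t), t)}" using sig_img[OF m] t by simp
    thus "X \<in> car MM // sigma MM" using m unfolding quotient_def by blast
  qed
qed

lemma qmul_cls: assumes s: "s \<in> words A" and t: "t \<in> words A"
  shows "qmul MM (cls s) (cls t) = cls (s @ t)"
proof -
  define a where "a = (SOME a. a \<in> cls s)"
  define b where "b = (SOME b. b \<in> cls t)"
  have a: "a \<in> cls s" unfolding a_def using cls_ne[OF s] by (rule someI)
  have b: "b \<in> cls t" unfolding b_def using cls_ne[OF t] by (rule someI)
  have m: "mul MM a b \<in> car MM" using cl1 cls_car a b by blast
  have "snd (mul MM a b) = s @ t" using MTE_snd_mul cls_snd a b by simp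
  thus ?thesis unfolding qmul_def a_def[symmetric] b_def[symmetric] using sig_img[OF m] by simp
qed

lemma idt_cls: "sigma MM `` {idt MM} = cls []"
  using sig_img[OF MTE_cl_idt] by (simp add: MTE_idt)

lemma uact_cls: assumes t: "t \<in> words A" and e: "e \<in> P"
  shows "uact MM (cls t) (e, []) = map_option (\<lambda>z. (z, [])) (wact S t e)"
proof -
  have nl: "\<And>a. a \<in> cls t \<Longrightarrow> nleq MM (e, []) (rs MM a) \<longleftrightarrow> ple S e (st (fst a \<cdot> wval S t))"
  proof -
    fix a assume a: "a \<in> cls t"
    obtain x where ax: "a = (x, t)" using cls_snd[OF a] by (cases a) auto
    have xc: "(x, t) \<in> car MM" using a ax cls_car by simp
    have xP: "x \<in> P" using MTE_carD[OF xc] by simp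
    show "nleq MM (e, []) (rs MM a) \<longleftrightarrow> ple S e (st (fst a \<cdot> wval S t))"
      using MTE_rs[OF xc] nleq_pair[OF e projI[of "x \<cdot> wval S t"]] ax xP t by simp
  qed
  show ?thesis
  proof (cases "ple S e (st (wval S t))")
    case True
    have ex: "\<exists>a\<in>cls t. nleq MM (e, []) (rs MM a)"
    proof
      show "(pl (wval S t), t) \<in> cls t" by (rule cls_ne[OF t])
      have "pl (wval S t) \<cdot> wval S t = wval S t" using ax5[of "wval S t" one] t by simp
      thus "nleq MM (e, []) (rs MM (pl (wval S t), t))" using nl[OF cls_ne[OF t]] True by simp
    qed
    define a where "a = (SOME a. a \<in> cls t \<and> nleq MM (e, []) (rs MM a))"
    have a: "a \<in> cls t \<and> nleq MM (e, []) (rs MM a)" unfolding a_def using ex by (metis (mono_tags, lifting) someI_ex)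
    obtain x where ax: "a = (x, t)" using cls_snd a by (cases a) auto
    have xc: "(x, t) \<in> car MM" using a ax cls_car[of "(x, t)" t] by simp
    have xP: "x \<in> P" using MTE_carD[OF xc] by simp
    have a': "(x, t) \<in> cls t" "nleq MM (e, []) (rs MM (x, t))" using a ax by auto
    have le: "ple S e (st (x \<cdot> wval S t))" using nl[OF a'(1)] a'(2) by simp
    have f3: "x \<cdot> wval S t = wval S t \<cdot> st (x \<cdot> wval S t)" using F3[of "wval S t" x] xP t by simp
    have "x \<cdot> wval S t \<cdot> e = wval S t \<cdot> st (x \<cdot> wval S t) \<cdot> e" using f3 by (rule arg_cong)
    also have "\<dots> = wval S t \<cdot> (st (x \<cdot> wval S t) \<cdot> e)" using xP t e projI by (simp add: assoc)
    finally have "x \<cdot> wval S t \<cdot> e = wval S t \<cdot> (st (x \<cdot> wval S t) \<cdot> e)" .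
    also have "st (x \<cdot> wval S t) \<cdot> e = e"
      using pleD[OF le] proj_comm[of e "st (x \<cdot> wval S t)"] e projI xP t by simp
    finally have xe: "x \<cdot> wval S t \<cdot> e = wval S t \<cdot> e" .
    have "uact MM (cls t) (e, []) = Some (rp MM (mul MM a (e, [])))"
      unfolding uact_def a_def using ex proj_pair[OF e] by simp
    also have "\<dots> = Some (pl (wval S t \<cdot> e), [])"
      using MTE_mul[OF xc e] ax xe by (simp add: MTE_rp)
    finally show ?thesis using wactS[OF e True] by simp
  next
    case False
    have "\<not> (\<exists>a\<in>cls t. nleq MM (e, []) (rs MM a))"
    proof
      assume "\<exists>a\<in>cls t. nleq MM (e, []) (rs MM a)"
      then obtain a where a: "a \<in> cls t" "nleq MM (e, []) (rs MM a)" by blast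
      obtain x where ax: "a = (x, t)" using cls_snd a by (cases a) auto
      have xc: "(x, t) \<in> car MM" using a ax cls_car by simp
      have xP: "x \<in> P" using MTE_carD[OF xc] by simp
      have "ple S e (st (x \<cdot> wval S t))" using nl a ax by simp
      hence "ple S e (st (wval S t))"
        using ple_trans[OF e _ _ _ st_le_mul[of "wval S t" x]] projI xP t by simp
      thus False using False by simp
    qed
    thus ?thesis using wactN False unfolding uact_def by simp
  qed
qed

lemma proj_MM_img: "proj MM = (\<lambda>e. (e, [])) ` P"
  using proj_MM by auto

lemma MTE_ultra_pda: "partially_defined_action (car MM // sigma MM) (qmul MM) (sigma MM `` {idt MM}) (proj MM) (uact MM)"
proof -
  have "partially_defined_action (cls ` words A) (qmul MM) (cls []) ((\<lambda>e. (e, [])) ` P) (uact MM)"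
  proof (rule pda_transfer[where T="words A" and tm="(@)" and tone="[]" and Y=P and act="wact S" and c=cls and j="\<lambda>e. (e, [])"])
    show "partially_defined_action (words A) (@) [] P (wact S)" by (rule pda)
    show "\<And>s t. s \<in> words A \<Longrightarrow> t \<in> words A \<Longrightarrow> s @ t \<in> words A" by simp
    show "[] \<in> words A" by simp
    show "\<And>s t. s \<in> words A \<Longrightarrow> t \<in> words A \<Longrightarrow> qmul MM (cls s) (cls t) = cls (s @ t)" by (rule qmul_cls)
    show "\<And>t y. t \<in> words A \<Longrightarrow> y \<in> P \<Longrightarrow> uact MM (cls t) (y, []) = map_option (\<lambda>z. (z, [])) (wact S t y)"
      by (rule uact_cls)
  qed simp_all
  thus ?thesis unfolding quot idt_cls proj_MM_img .
qed

lemma MTE_ultra: "ultra_F_restriction MM"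
  unfolding ultra_F_restriction_def using MTE_proper MTE_F MTE_ultra_pda by blast

end

theorem lemma3p10:
  fixes S :: "'a rmonoid" and A :: "'a set"
  assumes "restriction_monoid S"
    and "car S = gen_by S A"
  shows "partially_defined_action (words A) (@) [] (proj S) (wact S)
       \<and> axiom_A (words A) (proj S) (ple S) (wact S)
       \<and> axiom_B (words A) (proj S) (ple S) (wact S)
       \<and> axiom_C (words A) (proj S) (wact S)
       \<and> restriction_monoid (MTE S A)
       \<and> ultra_F_restriction (MTE S A)
       \<and> ample (MTE S A)
       \<and> rhom (MTE S A) S (\<lambda>(e, v). mul S e (wval S v))
       \<and> (\<lambda>(e, v). mul S e (wval S v)) ` car (MTE S A) = car S
       \<and> projection_separating (MTE S A) (\<lambda>(e, v). mul S e (wval S v))"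
proof -
  have Asub: "A \<subseteq> car S"
  proof
    fix a assume "a \<in> A"
    hence "a \<in> gen_by S A" by (rule gen_by.gen_base)
    thus "a \<in> car S" using assms(2) by simp
  qed
  interpret RMA S A by (rule RMA.intro[OF assms(1) Asub])
  show ?thesis
    using pda axA axB axC MTE_rm MTE_ultra MTE_ample MTE_rhom MTE_surj[OF assms(2)] MTE_psep
    by (intro conjI) assumption+
qed

end
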